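(* Let $G$, $w$, $\nu$ be as in the context. Let $\widehat{\mathcal{S}}=(S_m)_{m=0,\ldots,n}$, $n\ge1$, be a finite sequence of pairwise disjoint subsets of $V(G)$ with $\widehat{K}_m>0$ and $\widehat{D}_m>0$ for all $m=0,\ldots,n-1$. Then for all $1\le p<\infty$ and all $f\in\ell^p_\nu(G)$ with $f|_{V(G)\setminus S_0}=0$, \[ \|f|_{S_0}\|_{p,\nu}\le\frac{\hat\delta_{\widehat{\mathcal{S}},p}}{\hat a_{\widehat{\mathcal{S}},p}-1}\|\nabla_w f\|_p. \]
   Context: $G$ is an undirected weighted graph: $V(G)$ is a (countable) vertex set and $w:V(G)\times V(G)\to[0,\infty)$ is symmetric with $w(u,u)=0$. $\nu:V(G)\to(0,\infty)$ is a fixed vertex weight; $\|f\|_{p,\nu}=\left(\sum_v|f(v)|^p\nu(v)\right)^{1/p}$, $\|f|_A\|_{p,\nu}$ the same sum over $v\in A$. $\|\nabla_w f\|_p=\left(\sum_{u,v\in V(G)}|f(u)-f(v)|^pw(u,v)\right)^{1/p}$. $w_A(v)=\sum_{u\in A}w(u,v)$. For $0\le m<n$: $\widehat{K}_m=\inf_{v\in S_m}\frac{w_{S_{m+1}}(v)}{\nu(v)}$, $\widehat{D}_m=\sup_{v\in S_{m+1}}\frac{w_{S_m}(v)}{\nu(v)}$; $\hat a_{\widehat{\mathcal{S}},p}=\left(\sum_{m=0}^n\prod_{j=0}^{m-1}\frac{\widehat{K}_j}{\widehat{D}_j}\right)^{1/p}$; $\hat\delta_{\widehat{\mathcal{S}},p}=\max_{k=0,\ldots,n-1}\frac{1}{\widehat{K}_k}\sum_{m=k}^n\prod_{i=k}^{m-1}\frac{\widehat{K}_i}{\widehat{D}_i}$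 for $p=1$, and $\hat\delta_{\widehat{\mathcal{S}},p}=\left(\sum_{m=1}^n\left(\sum_{k=0}^{m-1}\widehat{K}_k^{-q/p}\left(\prod_{i=k}^{m-1}\frac{\widehat{K}_i}{\widehat{D}_i}\right)^{q/p}\right)^{p/q}\right)^{1/p}$ for $1<p<\infty$, $1/p+1/q=1$. Empty products equal $1$, empty sums equal $0$. *)

theory Defs
  imports "HOL-Analysis.Analysis" "HOL-Library.Extended_Nonnegative_Real"
begin

text \<open>Vertex set V(G) is the (countable) type 'v. Edge weights may sum to
infinity, so vertex/edge-weight sums are taken in ennreal.\<close>

definition wA :: "('v \<Rightarrow> 'v \<Rightarrow> real) \<Rightarrow> 'v set \<Rightarrow> 'v \<Rightarrow> ennreal" where
  "wA w A v = (\<Sum>\<^sub>\<infinity>u\<in>A. ennreal (w u v))"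

definition Khat :: "('v \<Rightarrow> 'v \<Rightarrow> real) \<Rightarrow> ('v \<Rightarrow> real) \<Rightarrow> (nat \<Rightarrow> 'v set) \<Rightarrow> nat \<Rightarrow> ennreal" where
  "Khat w \<nu> S m = (INF v\<in>S m. wA w (S (Suc m)) v / ennreal (\<nu> v))"

definition Dhat :: "('v \<Rightarrow> 'v \<Rightarrow> real) \<Rightarrow> ('v \<Rightarrow> real) \<Rightarrow> (nat \<Rightarrow> 'v set) \<Rightarrow> nat \<Rightarrow> ennreal" where
  "Dhat w \<nu> S m = (SUP v\<in>S (Suc m). wA w (S m) v / ennreal (\<nu> v))"

text \<open>Real-valued versions (used under the hypothesis 0 < Khat, Dhat < \<infinity>).\<close>
definition Kr where "Kr w \<nu> S m = enn2real (Khat w \<nu> S m)"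
definition Dr where "Dr w \<nu> S m = enn2real (Dhat w \<nu> S m)"

definition a_hat :: "('v \<Rightarrow> 'v \<Rightarrow> real) \<Rightarrow> ('v \<Rightarrow> real) \<Rightarrow> (nat \<Rightarrow> 'v set) \<Rightarrow> nat \<Rightarrow> real \<Rightarrow> real" where
  "a_hat w \<nu> S n p =
     (\<Sum>m=0..n. \<Prod>j<m. Kr w \<nu> S j / Dr w \<nu> S j) powr (1 / p)"

definition delta_hat :: "('v \<Rightarrow> 'v \<Rightarrow> real) \<Rightarrow> ('v \<Rightarrow> real) \<Rightarrow> (nat \<Rightarrow> 'v set) \<Rightarrow> nat \<Rightarrow> real \<Rightarrow> real" where
  "delta_hat w \<nu> S n p =
    (if p = 1 then
       Max ((\<lambda>k. (1 / Kr w \<nu> S k) *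
              (\<Sum>m=k..n. \<Prod>i=k..<m. Kr w \<nu> S i / Dr w \<nu> S i)) ` {0..<n})
     else
       (let q = p / (p - 1) in
        (\<Sum>m=1..n.
           (\<Sum>k=0..<m. (Kr w \<nu> S k) powr (- q / p) *
               (\<Prod>i=k..<m. Kr w \<nu> S i / Dr w \<nu> S i) powr (q / p)) powr (p / q))
        powr (1 / p)))"

text \<open>\<open>\<parallel>f|_A\<parallel>_{p,\<nu>}\<close> (for f in l^p_\<nu>, so the sum is a finite real).\<close>
definition restr_pnorm :: "('v \<Rightarrow> real) \<Rightarrow> real \<Rightarrow> 'v set \<Rightarrow> ('v \<Rightarrow> real) \<Rightarrow> real" where
  "restr_pnorm \<nu> p A f = (\<Sum>\<^sub>\<infinity>v\<in>A. \<bar>f v\<bar> powr p * \<nu> v) powr (1 / p)"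

definition grad_pnorm :: "('v \<Rightarrow> 'v \<Rightarrow> real) \<Rightarrow> real \<Rightarrow> ('v \<Rightarrow> real) \<Rightarrow> ennreal" where
  "grad_pnorm w p f =
     (let G = (\<Sum>\<^sub>\<infinity>(u,v)\<in>UNIV. ennreal (\<bar>f u - f v\<bar> powr p * w u v))
      in if G = top then top else ennreal (enn2real G powr (1 / p)))"

end

theory Submission
  imports Defs
begin

lemma sum_SUP_directed_ennreal:
  fixes g :: "'a \<Rightarrow> 'b set \<Rightarrow> ennreal"
  assumes F: "finite F" and I: "I \<noteq> {}"
    and un: "\<And>T T'. T \<in> I \<Longrightarrow> T' \<in> I \<Longrightarrow> T \<union> T' \<in> I"
    and mono: "\<And>u T T'. T \<in> I \<Longrightarrow> T' \<in> I \<Longrightarrow> T \<subseteq> T' \<Longrightarrow> g u T \<le> g u T'"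
  shows "(\<Sum>u\<in>F. SUP T\<in>I. g u T) = (SUP T\<in>I. \<Sum>u\<in>F. g u T)"
  using F
proof (induction F rule: finite_induct)
  case empty
  then show ?case using I by simp
next
  case (insert a F)
  have "(\<Sum>u\<in>insert a F. SUP T\<in>I. g u T) = (SUP T\<in>I. g a T) + (SUP T\<in>I. \<Sum>u\<in>F. g u T)"
    using insert by simp
  also have "\<dots> = (SUP T\<in>I. g a T + (\<Sum>u\<in>F. g u T))"
  proof (rule SUP_add_directed_ennreal[symmetric])
    fix i j assume "i \<in> I" "j \<in> I"
    then show "\<exists>k\<in>I. g a i + (\<Sum>u\<in>F. g u j) \<le> g a k + (\<Sum>u\<in>F. g u k)"
      by (intro bexI[of _ "i \<union> j"] add_mono mono sum_mono) (auto intro: un \<open>i \<in> I\<close> \<open>j \<in> I\<close>)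
  qed
  also have "\<dots> = (SUP T\<in>I. \<Sum>u\<in>insert a F. g u T)"
    using insert by simp
  finally show ?case .
qed

lemma superadd_powr:
  fixes a b p :: real
  assumes a: "0 \<le> a" and b: "0 \<le> b" and p: "1 \<le> p"
  shows "a powr p + b powr p \<le> (a + b) powr p"
proof (cases "a + b = 0")
  case True
  then have "a = 0" "b = 0" using a b by auto
  then show ?thesis by simp
next
  case False
  then have s: "a + b > 0" using a b by simp
  define s t where "s = a / (a+b)" and "t = b / (a+b)"
  have s01: "0 \<le> s" "s \<le> 1" using a b s by (auto simp: s_def)
  have t01: "0 \<le> t" "t \<le> 1" using a b s by (auto simp: t_def)
  have "s powr p \<le> s powr 1" by (rule powr_mono') (use s01 p in auto)
  moreover have "t powr p \<le> t powr 1" by (rule powr_mono') (use t01 p in auto)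
  ultimately have "s powr p + t powr p \<le> s + t" using s01 t01 by simp
  also have "s + t = 1" using s unfolding s_def t_def by (simp add: add_divide_distrib[symmetric])
  finally have "s powr p + t powr p \<le> 1" .
  moreover have "s powr p = a powr p / (a+b) powr p" unfolding s_def
    using a s by (simp add: powr_divide)
  moreover have "t powr p = b powr p / (a+b) powr p" unfolding t_def
    using b s by (simp add: powr_divide)
  ultimately have "(a powr p + b powr p) / (a+b) powr p \<le> 1"
    by (simp add: add_divide_distrib)
  moreover have "(a+b) powr p > 0" using s by simp
  ultimately show ?thesis by (simp add: divide_le_eq)
qed

lemma cbound:
  fixes K D :: "nat \<Rightarrow> real" and p :: real and n :: nat
  assumes pos: "\<And>m. m < n \<Longrightarrow> 0 < K m \<and> 0 < D m" and n: "1 \<le> n" and p: "1 \<le> p"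
  shows "K 0 powr (-1/p) \<le>
    (if p = 1 then
       Max ((\<lambda>k. (1 / K k) * (\<Sum>m=k..n. \<Prod>i=k..<m. K i / D i)) ` {0..<n})
     else
       (let q = p / (p - 1) in
        (\<Sum>m=1..n.
           (\<Sum>k=0..<m. (K k) powr (- q / p) *
               (\<Prod>i=k..<m. K i / D i) powr (q / p)) powr (p / q))
        powr (1 / p))) / ((\<Sum>m=0..n. \<Prod>j<m. K j / D j) powr (1 / p) - 1)"
    (is "_ \<le> ?d / (?a - 1)")
proof -
  define P where "P m = (\<Prod>j<m. K j / D j)" for m
  have Ppos: "0 < P m" if "m \<le> n" for m
    unfolding P_def using that pos by (intro prod_pos) (auto intro: divide_pos_pos)
  have P0: "(\<Prod>i=0..<m. K i / D i) = P m" for m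
    by (simp add: P_def atLeast0LessThan)
  define A where "A = (\<Sum>m=0..n. P m)"
  define B where "B = (\<Sum>m=1..n. P m)"
  have AB: "A = 1 + B"
    unfolding A_def B_def by (simp add: sum.atLeast_Suc_atMost P_def)
  have Bpos: "0 < B" unfolding B_def using n Ppos by (intro sum_pos) auto
  have K0: "0 < K 0" using pos n by auto
  have aA: "?a = A powr (1/p)" by (simp add: A_def P_def)
  have a1: "?a > 1" unfolding aA using AB Bpos p by (intro gr_one_powr) auto
  show ?thesis
  proof (cases "p = 1")
    case True
    have "(1 / K 0) * A \<le> Max ((\<lambda>k. (1 / K k) * (\<Sum>m=k..n. \<Prod>i=k..<m. K i / D i)) ` {0..<n})"
      using n by (intro Max_ge) (auto simp: A_def P0 image_iff intro!: bexI[of _ 0])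
    then have d: "A / K 0 \<le> ?d" using True by simp
    have "K 0 powr (-1/p) = 1 / K 0" using True K0 by (simp add: powr_minus divide_inverse)
    also have "\<dots> \<le> (A / K 0) / (A - 1)" using AB Bpos K0
      by (simp add: field_simps)
    also have "\<dots> \<le> ?d / (A - 1)" by (rule divide_right_mono) (use d AB Bpos in auto)
    also have "A - 1 = ?a - 1" using True AB Bpos aA by simp
    finally show ?thesis .
  next
    case False
    then have p1: "p > 1" using p by simp
    define q where "q = p / (p - 1)"
    have q: "q > 0" using p1 by (simp add: q_def)
    define inner where "inner m = (\<Sum>k=0..<m. (K k) powr (- q / p) *
               (\<Prod>i=k..<m. K i / D i) powr (q / p))" for m
    have dd: "?d = (\<Sum>m=1..n. inner m powr (p / q)) powr (1/p)"
      using False by (simp add: inner_def q_def Let_def)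
    have inner_ge: "K 0 powr (-1) * P m \<le> inner m powr (p / q)" if m: "1 \<le> m" "m \<le> n" for m
    proof -
      have "K 0 powr (- q / p) * P m powr (q / p) \<le> inner m"
        unfolding inner_def using m
        by (subst P0[symmetric], intro member_le_sum) auto
      then have "(K 0 powr (- q / p) * P m powr (q / p)) powr (p/q) \<le> inner m powr (p/q)"
        using q p1 by (intro powr_mono2) auto
      also have "(K 0 powr (- q / p) * P m powr (q / p)) powr (p/q) = K 0 powr (-1) * P m"
        using K0 Ppos[OF m(2)] q p1 by (simp add: powr_mult powr_powr)
      finally show ?thesis .
    qed
    have "K 0 powr (-1) * B \<le> (\<Sum>m=1..n. inner m powr (p / q))"
      unfolding B_def sum_distrib_left using inner_ge by (intro sum_mono) auto
    then have "(K 0 powr (-1) * B) powr (1/p) \<le> ?d"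
      unfolding dd using K0 Bpos p by (intro powr_mono2) auto
    moreover have "(K 0 powr (-1) * B) powr (1/p) = K 0 powr (-1/p) * B powr (1/p)"
      using K0 Bpos by (subst powr_mult) (auto simp: powr_powr powr_divide powr_minus_divide)
    ultimately have d: "K 0 powr (-1/p) * B powr (1/p) \<le> ?d" by simp
    have "(?a - 1) powr p + 1 powr p \<le> (?a - 1 + 1) powr p"
      using a1 p by (intro superadd_powr) auto
    also have "(?a - 1 + 1) powr p = A" using AB Bpos p by (simp add: aA powr_powr)
    finally have "(?a - 1) powr p \<le> B" using AB by simp
    then have "((?a - 1) powr p) powr (1/p) \<le> B powr (1/p)"
      using a1 p by (intro powr_mono2) auto
    then have ab: "?a - 1 \<le> B powr (1/p)" using a1 p by (simp add: powr_powr)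
    have "K 0 powr (-1/p) = K 0 powr (-1/p) * (?a - 1) / (?a - 1)" using a1 by simp
    also have "\<dots> \<le> K 0 powr (-1/p) * B powr (1/p) / (?a - 1)"
      using a1 ab by (intro divide_right_mono mult_left_mono) auto
    also have "\<dots> \<le> ?d / (?a - 1)" using d a1 by (intro divide_right_mono) auto
    finally show ?thesis .
  qed
qed

theorem corollary1p6:
  fixes w :: "'v::countable \<Rightarrow> 'v \<Rightarrow> real" and \<nu> :: "'v \<Rightarrow> real"
    and S :: "nat \<Rightarrow> 'v set" and n :: nat and p :: real and f :: "'v \<Rightarrow> real"
  assumes w_nonneg: "\<And>u v. w u v \<ge> 0"
    and w_sym: "\<And>u v. w u v = w v u"
    and w_diag: "\<And>u. w u u = 0"
    and \<nu>_pos: "\<And>v. \<nu> v > 0"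
    and n: "n \<ge> 1"
    and disj: "\<And>i j. i \<le> n \<Longrightarrow> j \<le> n \<Longrightarrow> i \<noteq> j \<Longrightarrow> S i \<inter> S j = {}"
    and K_pos: "\<And>m. m < n \<Longrightarrow> 0 < Khat w \<nu> S m \<and> Khat w \<nu> S m < top"
    and D_pos: "\<And>m. m < n \<Longrightarrow> 0 < Dhat w \<nu> S m \<and> Dhat w \<nu> S m < top"
    and p: "1 \<le> p"
    and f_lp: "(\<lambda>v. \<bar>f v\<bar> powr p * \<nu> v) summable_on UNIV"
    and f_supp: "\<And>v. v \<notin> S 0 \<Longrightarrow> f v = 0"
  shows "ennreal (restr_pnorm \<nu> p (S 0) f)
           \<le> ennreal (delta_hat w \<nu> S n p / (a_hat w \<nu> S n p - 1)) * grad_pnorm w p f"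
proof -
  define K0 where "K0 = Kr w \<nu> S 0"
  define c where "c = delta_hat w \<nu> S n p / (a_hat w \<nu> S n p - 1)"
  have Kh: "0 < Khat w \<nu> S 0" "Khat w \<nu> S 0 < top" using K_pos n by auto
  have KK0: "Khat w \<nu> S 0 = ennreal K0" unfolding K0_def Kr_def using Kh by simp
  have K0pos: "0 < K0" unfolding K0_def Kr_def using Kh
    by (simp add: enn2real_positive_iff)
  have Krpos: "\<And>m. m < n \<Longrightarrow> 0 < Kr w \<nu> S m \<and> 0 < Dr w \<nu> S m"
    unfolding Kr_def Dr_def using K_pos D_pos by (simp add: enn2real_positive_iff)
  have cb: "K0 powr (-1/p) \<le> c"
    unfolding c_def delta_hat_def a_hat_def K0_def
    by (rule cbound[OF Krpos n p])
  have "0 < K0 powr (-1/p)" using K0pos by simp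
  then have cpos: "0 < c" using cb by linarith
  define a where "a u = \<bar>f u\<bar> powr p" for u
  define h where "h uv = ennreal (\<bar>f (fst uv) - f (snd uv)\<bar> powr p * w (fst uv) (snd uv))" for uv
  define G where "G = (\<Sum>\<^sub>\<infinity>(u,v)\<in>UNIV. ennreal (\<bar>f u - f v\<bar> powr p * w u v))"
  have Gh: "G = infsum h UNIV" unfolding G_def h_def by (simp add: case_prod_unfold)
  define I where "I = {T. finite T \<and> T \<subseteq> S 1}"
  define N where "N = (\<Sum>\<^sub>\<infinity>v\<in>S 0. \<bar>f v\<bar> powr p * \<nu> v)"
  have disj01: "S 0 \<inter> S 1 = {}" using disj[of 0 1] n by auto
  have fin_le: "sum h X \<le> G" if "finite X" for X
  proof -
    have "sum h X \<in> sum h ` {F. finite F \<and> F \<subseteq> UNIV}" using that by auto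
    then show ?thesis unfolding Gh by (subst nonneg_infsum_complete) (auto intro: Sup_upper)
  qed
  have wA_eq: "wA w (S 1) u = (SUP T\<in>I. \<Sum>v\<in>T. ennreal (w v u))" for u
    unfolding wA_def I_def by (subst nonneg_infsum_complete) auto
  have stepB: "ennreal (a u * \<nu> u) * Khat w \<nu> S 0 \<le> ennreal (a u) * wA w (S 1) u" if u: "u \<in> S 0" for u
  proof -
    have "Khat w \<nu> S 0 \<le> wA w (S 1) u / ennreal (\<nu> u)"
      unfolding Khat_def using u by (auto intro: INF_lower)
    then have "Khat w \<nu> S 0 * ennreal (\<nu> u) \<le> wA w (S 1) u / ennreal (\<nu> u) * ennreal (\<nu> u)"
      by (rule mult_right_mono) simp
    also have "\<dots> = wA w (S 1) u" using \<nu>_pos[of u]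
      by (simp add: ennreal_divide_times ennreal_divide_self)
    finally have "Khat w \<nu> S 0 * ennreal (\<nu> u) \<le> wA w (S 1) u" .
    then have "ennreal (a u) * (Khat w \<nu> S 0 * ennreal (\<nu> u)) \<le> ennreal (a u) * wA w (S 1) u"
      by (rule mult_left_mono) simp
    moreover have "ennreal (a u * \<nu> u) = ennreal (a u) * ennreal (\<nu> u)"
      using \<nu>_pos[of u] by (simp add: a_def ennreal_mult)
    ultimately show ?thesis by (simp add: ac_simps)
  qed
  have stepC: "(\<Sum>u\<in>F. ennreal (a u) * wA w (S 1) u) \<le> G" if F: "finite F" "F \<subseteq> S 0" for F
  proof -
    have "(\<Sum>u\<in>F. ennreal (a u) * wA w (S 1) u)
        = (\<Sum>u\<in>F. SUP T\<in>I. ennreal (a u) * (\<Sum>v\<in>T. ennreal (w v u)))"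
      unfolding wA_eq by (simp only: SUP_mult_left_ennreal image_image)
    also have "\<dots> = (SUP T\<in>I. \<Sum>u\<in>F. ennreal (a u) * (\<Sum>v\<in>T. ennreal (w v u)))"
    proof (rule sum_SUP_directed_ennreal[OF F(1)])
      show "I \<noteq> {}" unfolding I_def by auto
      show "T \<union> T' \<in> I" if "T \<in> I" "T' \<in> I" for T T' using that unfolding I_def by auto
      show "ennreal (a u) * (\<Sum>v\<in>T. ennreal (w v u)) \<le> ennreal (a u) * (\<Sum>v\<in>T'. ennreal (w v u))"
        if "T \<in> I" "T' \<in> I" "T \<subseteq> T'" for u T T'
        using that unfolding I_def by (intro mult_left_mono sum_mono2) auto
    qed
    also have "\<dots> \<le> G"
    proof (rule SUP_least)
      fix T assume T: "T \<in> I"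
      have "(\<Sum>u\<in>F. ennreal (a u) * (\<Sum>v\<in>T. ennreal (w v u))) = (\<Sum>u\<in>F. \<Sum>v\<in>T. h (u, v))"
      proof (intro sum.cong refl)
        fix u v assume u: "u \<in> F"
        show "ennreal (a u) * (\<Sum>v\<in>T. ennreal (w v u)) = (\<Sum>v\<in>T. h (u, v))"
          unfolding sum_distrib_left
        proof (intro sum.cong refl)
          fix v assume v: "v \<in> T"
          then have "v \<notin> S 0" using T disj01 unfolding I_def by auto
          then have "f v = 0" by (rule f_supp)
          then show "ennreal (a u) * ennreal (w v u) = h (u, v)"
            unfolding h_def a_def using w_nonneg[of v u]
            by (simp add: ennreal_mult'' w_sym[of v u])
        qed
      qed
      also have "\<dots> = sum h (F \<times> T)" by (simp add: sum.cartesian_product)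
      also have "\<dots> \<le> G" using T F unfolding I_def by (intro fin_le) auto
      finally show "(\<Sum>u\<in>F. ennreal (a u) * (\<Sum>v\<in>T. ennreal (w v u))) \<le> G" .
    qed
    finally show ?thesis .
  qed
  have sumS0: "(\<lambda>v. \<bar>f v\<bar> powr p * \<nu> v) summable_on S 0"
    using f_lp by (rule summable_on_subset_banach) simp
  have nn: "\<And>x. 0 \<le> \<bar>f x\<bar> powr p * \<nu> x" using \<nu>_pos by (simp add: less_imp_le)
  have Nnn: "0 \<le> N" unfolding N_def using nn by (intro infsum_nonneg) auto
  have "ennreal N = (SUP F\<in>{F. finite F \<and> F \<subseteq> S 0}. ennreal (\<Sum>u\<in>F. a u * \<nu> u))"
    unfolding N_def a_def using sumS0 nn
    by (subst infsum_nonneg_is_SUPREMUM_ennreal) auto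
  then have "Khat w \<nu> S 0 * ennreal N
      = (SUP F\<in>{F. finite F \<and> F \<subseteq> S 0}. Khat w \<nu> S 0 * ennreal (\<Sum>u\<in>F. a u * \<nu> u))"
    by (simp add: SUP_mult_left_ennreal image_image)
  also have "\<dots> \<le> G"
  proof (rule SUP_least)
    fix F assume F: "F \<in> {F. finite F \<and> F \<subseteq> S 0}"
    have "Khat w \<nu> S 0 * ennreal (\<Sum>u\<in>F. a u * \<nu> u) = (\<Sum>u\<in>F. ennreal (a u * \<nu> u) * Khat w \<nu> S 0)"
    proof -
      have "ennreal (\<Sum>u\<in>F. a u * \<nu> u) = (\<Sum>u\<in>F. ennreal (a u * \<nu> u))"
        using nn by (subst sum_ennreal) (auto simp: a_def)
      then show ?thesis by (simp add: sum_distrib_left mult.commute)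
    qed
    also have "\<dots> \<le> (\<Sum>u\<in>F. ennreal (a u) * wA w (S 1) u)"
      using F stepB by (intro sum_mono) auto
    also have "\<dots> \<le> G" using F stepC by auto
    finally show "Khat w \<nu> S 0 * ennreal (\<Sum>u\<in>F. a u * \<nu> u) \<le> G" .
  qed
  finally have KN: "ennreal (K0 * N) \<le> G" using KK0 K0pos Nnn by (simp add: ennreal_mult)
  have grad: "grad_pnorm w p f = (if G = top then top else ennreal (enn2real G powr (1/p)))"
    unfolding grad_pnorm_def G_def by simp
  have restr: "restr_pnorm \<nu> p (S 0) f = N powr (1/p)"
    unfolding restr_pnorm_def N_def by simp
  show ?thesis
  proof (cases "G = top")
    case True
    then show ?thesis using cpos by (simp add: grad c_def[symmetric])
  next
    case False
    define g where "g = enn2real G"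
    have gnn: "0 \<le> g" unfolding g_def by simp
    have Gg: "G = ennreal g" unfolding g_def using False by (simp add: less_top)
    have "K0 * N \<le> g" using KN Gg gnn by (simp add: ennreal_le_iff)
    then have Ng: "N \<le> g / K0" using K0pos by (simp add: field_simps)
    have "N powr (1/p) \<le> (g / K0) powr (1/p)" using Ng Nnn p by (intro powr_mono2) auto
    also have "\<dots> = K0 powr (-1/p) * g powr (1/p)"
      using K0pos gnn by (simp add: powr_divide powr_minus_divide)
    also have "\<dots> \<le> c * g powr (1/p)" using cb by (intro mult_right_mono) auto
    finally have "ennreal (N powr (1/p)) \<le> ennreal (c * g powr (1/p))" by (rule ennreal_leI)
    also have "\<dots> = ennreal c * ennreal (g powr (1/p))" using cpos by (simp add: ennreal_mult)
    finally show ?thesis using False by (simp add: restr grad c_def[symmetric] g_def)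
  qed
qed

end
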